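(* Let $U,V\in\mathbb{R}_{\max}^{m\times n}$, $b,d\in\mathbb{R}_{\max}^m$, $p\in\mathbb{R}_{\max}^n$, $q\in(\mathbb{R}\cup\{+\infty\})^n$, and suppose all finite entries of $p,q,U,b,V,d$ are integers. Consider the problem of minimizing $x^-\otimes p\oplus q^-\otimes x$ over $x\in\mathbb{R}^n$ subject to $U\otimes x\oplus b\leq V\otimes x\oplus d$. If the optimal value of this problem is finite, then it is an integer multiple of $1/2$.
   Context: $\mathbb{R}_{\max}=\mathbb{R}\cup\{-\infty\}$ with $a\oplus b=\max(a,b)$ and $a\otimes b=a+b$, extended to matrices and vectors in the usual way ($(A\otimes x)_i=\max_j(a_{ij}+x_j)$, componentwise max for $\oplus$). The conjugate of $a\in\mathbb{R}\cup\{\pm\infty\}$ is $a^-=-a$ if $a\in\mathbb{R}$, $+\infty$ if $a=-\infty$, $-\infty$ if $a=+\infty$; for a column vector $x$, $x^-$ is the row vector $(x_i^-)$. Thus $x^-\otimes p=\max_i(p_i-x_i)$ and $q^-\otimes x=\max_i(x_i-q_i)$ (terms with $p_i=-\infty$ or $q_i=+\infty$ being $-\infty$). *)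

theory Defs
  imports "HOL-Analysis.Analysis"
begin

text \<open>Max-plus semiring R_max = R \<union> {-\<infinity>} embedded in ereal.
  Matrices/vectors are nat-indexed with explicit bounds m, n.\<close>

definition is_int_ereal :: "ereal \<Rightarrow> bool" where
  "is_int_ereal a \<longleftrightarrow> (\<exists>k::int. a = ereal (of_int k))"

definition mp_affine :: "nat \<Rightarrow> (nat \<Rightarrow> nat \<Rightarrow> ereal) \<Rightarrow> (nat \<Rightarrow> ereal) \<Rightarrow> (nat \<Rightarrow> real) \<Rightarrow> nat \<Rightarrow> ereal" where
  "mp_affine n A c x i = max (SUP j\<in>{..<n}. A i j + ereal (x j)) (c i)"

text \<open>x^- \<otimes> p \<oplus> q^- \<otimes> x = max (max_j (p_j - x_j)) (max_j (x_j - q_j))\<close>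
definition mp_objective :: "nat \<Rightarrow> (nat \<Rightarrow> ereal) \<Rightarrow> (nat \<Rightarrow> ereal) \<Rightarrow> (nat \<Rightarrow> real) \<Rightarrow> ereal" where
  "mp_objective n p q x = max (SUP j\<in>{..<n}. p j - ereal (x j)) (SUP j\<in>{..<n}. ereal (x j) - q j)"

definition mp_feasible :: "nat \<Rightarrow> nat \<Rightarrow> (nat \<Rightarrow> nat \<Rightarrow> ereal) \<Rightarrow> (nat \<Rightarrow> ereal) \<Rightarrow> (nat \<Rightarrow> nat \<Rightarrow> ereal) \<Rightarrow> (nat \<Rightarrow> ereal) \<Rightarrow> (nat \<Rightarrow> real) \<Rightarrow> bool" where
  "mp_feasible m n U b V d x \<longleftrightarrow> (\<forall>i<m. mp_affine n U b x i \<le> mp_affine n V d x i)"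

text \<open>Optimal value = infimum of objective over feasible x \<in> R^n (x_j, j<n; other coordinates irrelevant).\<close>
definition mp_optval :: "nat \<Rightarrow> nat \<Rightarrow> (nat \<Rightarrow> nat \<Rightarrow> ereal) \<Rightarrow> (nat \<Rightarrow> ereal) \<Rightarrow> (nat \<Rightarrow> nat \<Rightarrow> ereal) \<Rightarrow> (nat \<Rightarrow> ereal) \<Rightarrow> (nat \<Rightarrow> ereal) \<Rightarrow> (nat \<Rightarrow> ereal) \<Rightarrow> ereal" where
  "mp_optval m n U b V d p q = (INF x\<in>{x. mp_feasible m n U b V d x}. mp_objective n p q x)"

end

theory Submission
  imports Defs
begin

definition extG :: "(real \<Rightarrow> real) \<Rightarrow> ereal \<Rightarrow> ereal" where
  "extG g t = (case t of ereal r \<Rightarrow> ereal (g r) | PInfty \<Rightarrow> PInfty | MInfty \<Rightarrow> MInfty)"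

lemma extG_mono:
  assumes "mono g" shows "mono (extG g)"
proof (rule monoI)
  fix a b :: ereal assume "a \<le> b"
  then show "extG g a \<le> extG g b"
    using assms by (cases a; cases b) (auto simp: extG_def mono_def)
qed

lemma extG_SUP:
  fixes G :: "ereal \<Rightarrow> ereal"
  assumes "finite S" "mono G" "G (-\<infinity>) = -\<infinity>"
  shows "G (SUP j\<in>S. f j) = (SUP j\<in>S. G (f j))"
  using assms(1)
proof (induction S rule: finite_induct)
  case empty
  then show ?case using assms(3) by (simp add: bot_ereal_def)
next
  case (insert a S)
  then show ?case using max_of_mono[OF assms(2), of "f a" "Sup (f ` S)"] by (simp add: sup_max)
qed

lemma extG_term:
  assumes "a \<noteq> \<infinity>" "a \<noteq> -\<infinity> \<longrightarrow> is_int_ereal a"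
    and tr: "\<And>t z. g (t + of_int z) = g t + of_int z"
  shows "extG g (a + ereal t) = a + ereal (g t)"
proof (cases "a = -\<infinity>")
  case True then show ?thesis by (simp add: extG_def)
next
  case False
  then obtain z :: int where "a = ereal (of_int z)" using assms unfolding is_int_ereal_def by auto
  then show ?thesis using tr[of t z] by (simp add: extG_def add.commute)
qed

lemma extG_const:
  assumes "a \<noteq> \<infinity>" "a \<noteq> -\<infinity> \<longrightarrow> is_int_ereal a"
    and tr: "\<And>t z. g (t + of_int z) = g t + of_int z" and g0: "g 0 = 0"
  shows "extG g a = a"
proof (cases "a = -\<infinity>")
  case True then show ?thesis by (simp add: extG_def)
next
  case False
  then obtain z :: int where "a = ereal (of_int z)" using assms unfolding is_int_ereal_def by auto
  then show ?thesis using tr[of 0 z] g0 by (simp add: extG_def)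
qed

lemma extG_affine:
  assumes mg: "mono g" and tr: "\<And>t z. g (t + of_int z) = g t + of_int z" and g0: "g 0 = 0"
    and A: "\<forall>j<n. A i j \<noteq> \<infinity> \<and> (A i j \<noteq> -\<infinity> \<longrightarrow> is_int_ereal (A i j))"
    and c: "c i \<noteq> \<infinity> \<and> (c i \<noteq> -\<infinity> \<longrightarrow> is_int_ereal (c i))"
  shows "extG g (mp_affine n A c x i) = mp_affine n A c (g \<circ> x) i"
proof -
  have M: "mono (extG g)" using extG_mono[OF mg] .
  have m1: "extG g (-\<infinity>) = -\<infinity>" by (simp add: extG_def)
  have "extG g (mp_affine n A c x i) = max (extG g (SUP j\<in>{..<n}. A i j + ereal (x j))) (extG g (c i))"
    unfolding mp_affine_def using max_of_mono[OF M] by simp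
  also have "extG g (SUP j\<in>{..<n}. A i j + ereal (x j)) = (SUP j\<in>{..<n}. extG g (A i j + ereal (x j)))"
    by (rule extG_SUP[OF _ M m1]) simp
  also have "\<dots> = (SUP j\<in>{..<n}. A i j + ereal ((g \<circ> x) j))"
    using extG_term[OF _ _ tr] A by (intro SUP_cong) auto
  also have "extG g (c i) = c i" using extG_const[OF _ _ tr g0] c by auto
  finally show ?thesis unfolding mp_affine_def .
qed

lemma round_feasible:
  assumes mg: "mono g" and tr: "\<And>t z. g (t + of_int z) = g t + of_int z" and g0: "g 0 = 0"
    and U: "\<forall>i<m. \<forall>j<n. U i j \<noteq> \<infinity> \<and> (U i j \<noteq> -\<infinity> \<longrightarrow> is_int_ereal (U i j))"
    and V: "\<forall>i<m. \<forall>j<n. V i j \<noteq> \<infinity> \<and> (V i j \<noteq> -\<infinity> \<longrightarrow> is_int_ereal (V i j))"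
    and b: "\<forall>i<m. b i \<noteq> \<infinity> \<and> (b i \<noteq> -\<infinity> \<longrightarrow> is_int_ereal (b i))"
    and d: "\<forall>i<m. d i \<noteq> \<infinity> \<and> (d i \<noteq> -\<infinity> \<longrightarrow> is_int_ereal (d i))"
    and fx: "mp_feasible m n U b V d x"
  shows "mp_feasible m n U b V d (g \<circ> x)"
  unfolding mp_feasible_def
proof (intro allI impI)
  fix i assume i: "i < m"
  have "extG g (mp_affine n U b x i) \<le> extG g (mp_affine n V d x i)"
    using fx i extG_mono[OF mg] unfolding mp_feasible_def mono_def by blast
  then show "mp_affine n U b (g \<circ> x) i \<le> mp_affine n V d (g \<circ> x) i"
    using extG_affine[OF mg tr g0, of n U i b x] extG_affine[OF mg tr g0, of n V i d x] U V b d i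
    by auto
qed

lemma round_obj:
  assumes h1: "\<And>(P::int) t. of_int P - t < s \<Longrightarrow> of_int P - g t \<le> s'"
    and h2: "\<And>(P::int) t. t - of_int P < s \<Longrightarrow> g t - of_int P \<le> s'"
    and p: "\<forall>j<n. p j \<noteq> \<infinity> \<and> (p j \<noteq> -\<infinity> \<longrightarrow> is_int_ereal (p j))"
    and q: "\<forall>j<n. q j \<noteq> -\<infinity> \<and> (q j \<noteq> \<infinity> \<longrightarrow> is_int_ereal (q j))"
    and ob: "mp_objective n p q x < ereal s"
  shows "mp_objective n p q (g \<circ> x) \<le> ereal s'"
  unfolding mp_objective_def
proof (intro max.boundedI SUP_least)
  fix j assume j: "j \<in> {..<n}"
  have "p j - ereal (x j) \<le> mp_objective n p q x"
    unfolding mp_objective_def using j by (intro max.coboundedI1 SUP_upper) auto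
  then have lt: "p j - ereal (x j) < ereal s" using ob by simp
  show "p j - ereal ((g \<circ> x) j) \<le> ereal s'"
  proof (cases "p j = -\<infinity>")
    case True then show ?thesis by simp
  next
    case False
    then obtain z :: int where "p j = ereal (of_int z)" using p j unfolding is_int_ereal_def by auto
    then show ?thesis using lt h1[of z "x j"] by simp
  qed
next
  fix j assume j: "j \<in> {..<n}"
  have "ereal (x j) - q j \<le> mp_objective n p q x"
    unfolding mp_objective_def using j by (intro max.coboundedI2 SUP_upper) auto
  then have lt: "ereal (x j) - q j < ereal s" using ob by simp
  show "ereal ((g \<circ> x) j) - q j \<le> ereal s'"
  proof (cases "q j = \<infinity>")
    case True then show ?thesis by simp
  next
    case False
    then obtain z :: int where "q j = ereal (of_int z)" using q j unfolding is_int_ereal_def by auto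
    then show ?thesis using lt h2[of "x j" z] by simp
  qed
qed


definition g1 :: "real \<Rightarrow> real" where "g1 t = of_int (floor (t + 1/2))"
definition g2 :: "real \<Rightarrow> real" where "g2 t = (of_int (floor t) + of_int (ceiling t)) / 2"

lemma g1_mono: "mono g1"
  unfolding g1_def by (intro monoI) (simp add: floor_mono)

lemma g1_tr: "g1 (t + of_int z) = g1 t + of_int z"
proof -
  have "t + of_int z + 1/2 = (t + 1/2) + of_int z" by simp
  then show ?thesis unfolding g1_def by (simp only: floor_add_int) simp
qed

lemma g1_0: "g1 0 = 0"
  unfolding g1_def by simp

lemma g1_h1: "of_int P - t < of_int w + 1/2 \<Longrightarrow> of_int P - g1 t \<le> of_int w"
proof -
  assume a: "of_int P - t < of_int w + 1/2"
  have "P - w \<le> floor (t + 1/2)" by (subst le_floor_iff) (use a in simp)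
  then show ?thesis unfolding g1_def by linarith
qed

lemma g1_h2: "t - of_int P < of_int w + 1/2 \<Longrightarrow> g1 t - of_int P \<le> of_int w"
proof -
  assume a: "t - of_int P < of_int w + 1/2"
  have "floor (t + 1/2) \<le> P + w" by (subst floor_le_iff) (use a in simp)
  then show ?thesis unfolding g1_def by linarith
qed

lemma g2_mono: "mono g2"
  unfolding g2_def by (intro monoI) (simp add: floor_mono ceiling_mono add_mono divide_right_mono)

lemma g2_tr: "g2 (t + of_int z) = g2 t + of_int z"
  unfolding g2_def by (simp add: field_simps)

lemma g2_0: "g2 0 = 0"
  unfolding g2_def by simp

lemma g2_h1: "of_int P - t < of_int w + 1 \<Longrightarrow> of_int P - g2 t \<le> of_int w + 1/2"
proof -
  assume a: "of_int P - t < of_int w + 1"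
  have "P - w - 1 \<le> floor t" by (subst le_floor_iff) (use a in simp)
  then have "real_of_int P - of_int w - 1 \<le> of_int (floor t)" by linarith
  moreover have "P - w \<le> ceiling t" by (subst le_ceiling_iff) (use a in simp)
  then have "real_of_int P - of_int w \<le> of_int (ceiling t)" by linarith
  ultimately show ?thesis unfolding g2_def by (simp add: field_simps)
qed

lemma g2_h2: "t - of_int P < of_int w + 1 \<Longrightarrow> g2 t - of_int P \<le> of_int w + 1/2"
proof -
  assume a: "t - of_int P < of_int w + 1"
  have "floor t \<le> P + w" by (subst floor_le_iff) (use a in simp)
  then have "real_of_int (floor t) \<le> of_int P + of_int w" by linarith
  moreover have "ceiling t \<le> P + w + 1" by (subst ceiling_le_iff) (use a in simp)
  then have "real_of_int (ceiling t) \<le> of_int P + of_int w + 1" by linarith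
  ultimately show ?thesis unfolding g2_def by (simp add: field_simps)
qed


theorem proposition9:
  fixes m n :: nat
    and U V :: "nat \<Rightarrow> nat \<Rightarrow> ereal" and b d p q :: "nat \<Rightarrow> ereal"
  assumes U: "\<forall>i<m. \<forall>j<n. U i j \<noteq> \<infinity> \<and> (U i j \<noteq> -\<infinity> \<longrightarrow> is_int_ereal (U i j))"
    and V: "\<forall>i<m. \<forall>j<n. V i j \<noteq> \<infinity> \<and> (V i j \<noteq> -\<infinity> \<longrightarrow> is_int_ereal (V i j))"
    and b: "\<forall>i<m. b i \<noteq> \<infinity> \<and> (b i \<noteq> -\<infinity> \<longrightarrow> is_int_ereal (b i))"
    and d: "\<forall>i<m. d i \<noteq> \<infinity> \<and> (d i \<noteq> -\<infinity> \<longrightarrow> is_int_ereal (d i))"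
    and p: "\<forall>j<n. p j \<noteq> \<infinity> \<and> (p j \<noteq> -\<infinity> \<longrightarrow> is_int_ereal (p j))"
    and q: "\<forall>j<n. q j \<noteq> -\<infinity> \<and> (q j \<noteq> \<infinity> \<longrightarrow> is_int_ereal (q j))"
    and fin: "\<bar>mp_optval m n U b V d p q\<bar> \<noteq> \<infinity>"
  shows "\<exists>k::int. mp_optval m n U b V d p q = ereal (real_of_int k / 2)"
proof (rule ccontr)
  assume nk: "\<not> ?thesis"
  obtain r where r: "mp_optval m n U b V d p q = ereal r" using fin by (cases "mp_optval m n U b V d p q") auto
  define k where "k = floor (2 * r)"
  have "of_int k \<le> 2 * r" unfolding k_def by simp
  moreover have "of_int k \<noteq> 2 * r" using nk r by (metis nonzero_mult_div_cancel_left zero_neq_numeral)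
  ultimately have lo: "real_of_int k / 2 < r" by simp
  have "2 * r < of_int k + 1" unfolding k_def by linarith
  then have hi: "r < (real_of_int k + 1) / 2" by simp
  have "(INF x\<in>{x. mp_feasible m n U b V d x}. mp_objective n p q x) < ereal ((real_of_int k + 1) / 2)"
    using r hi unfolding mp_optval_def by simp
  then obtain x where fx: "mp_feasible m n U b V d x"
    and ox: "mp_objective n p q x < ereal ((real_of_int k + 1) / 2)"
    by (auto simp: INF_less_iff)
  have "\<exists>g. mp_feasible m n U b V d (g \<circ> x) \<and> mp_objective n p q (g \<circ> x) \<le> ereal (real_of_int k / 2)"
  proof (cases "even k")
    case True
    then obtain w where w: "k = 2 * w" by auto
    have e1: "(real_of_int k + 1) / 2 = of_int w + 1/2" "real_of_int k / 2 = of_int w" using w by simp_all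
    show ?thesis
      using round_feasible[OF g1_mono g1_tr g1_0 U V b d fx]
        round_obj[of "of_int w + 1/2" g1 "of_int w", OF g1_h1 g1_h2 p q] ox e1
      by auto
  next
    case False
    then obtain w where w: "k = 2 * w + 1" by (metis oddE)
    have e1: "(real_of_int k + 1) / 2 = of_int w + 1" "real_of_int k / 2 = of_int w + 1/2" using w by simp_all
    have "mp_objective n p q (g2 \<circ> x) \<le> ereal (of_int w + 1/2)"
      using round_obj[of "of_int w + 1" g2 "of_int w + 1/2", OF g2_h1 g2_h2 p q] ox e1 by simp
    then show ?thesis
      using round_feasible[OF g2_mono g2_tr g2_0 U V b d fx] e1 by metis
  qed
  then obtain g where fy: "mp_feasible m n U b V d (g \<circ> x)"
    and oy: "mp_objective n p q (g \<circ> x) \<le> ereal (real_of_int k / 2)" by blast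
  have "mp_optval m n U b V d p q \<le> mp_objective n p q (g \<circ> x)"
    unfolding mp_optval_def using fy by (intro INF_lower) simp
  then have "ereal r \<le> ereal (real_of_int k / 2)" using oy r by (metis order.trans)
  then show False using lo by simp
qed

end
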